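(* Let $\hat\mu\in\operatorname{conv}\{g_1,\dots,g_N\}$ and consider the MW–MMW rounds for the fixed center $\hat\mu$ with $w^{(1)}$ having positive entries and $0<\eta_\rho\nu\le1/2$, $0<\eta_w\nu\le 1/2$. Then for every $w\in\Delta_{N,\epsilon}$ and every $\rho\in\mathfrak D_p$, $$\sum_{t=1}^T\langle S^{(t)},\rho\rangle\le(1+\eta_\rho\nu)(1+\eta_w\nu)\sum_{t=1}^T\langle m^{(t)},w\rangle+\frac{(1+\eta_\rho\nu)\,\mathrm{RE}(w\|w^{(1)})}{\eta_w}+\frac{\log p}{\eta_\rho}.$$ In particular, for the uniform initialization $w^{(1)}=(1/N,\dots,1/N)$, $$\sum_{t=1}^T\langle S^{(t)},\rho\rangle\le(1+\eta_\rho\nu)(1+\eta_w\nu)\sum_{t=1}^T\langle m^{(t)},w\rangle+\frac{(1+\eta_\rho\nu)\log\frac{1}{1-\epsilon}}{\eta_w}+\frac{\log p}{\eta_\rho}.$$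
   Context: Fix integers $N\ge1$, $p\ge1$, $\epsilon\in[0,1)$ and vectors $g_1,\dots,g_N\in\mathbb R^p$. The capped simplex is $\Delta_{N,\epsilon}=\{w\in\mathbb R^N:\sum_n w_n=1,\ 0\le w_n\le \frac{1}{(1-\epsilon)N}\}$; density matrices $\mathfrak D_p=\{\rho\in\mathbb R^{p\times p}:\rho=\rho^\top\succeq0,\mathrm{Tr}\,\rho=1\}$; $\langle A,B\rangle=\mathrm{Tr}(A^\top B)$; $\nu=\max_{i,j}\|g_i-g_j\|_2^2$. Relative entropy: $\mathrm{RE}(w\|v)=\sum_n w_n\log(w_n/v_n)$ (with $0\log0=0$). MW–MMW rounds for a fixed center $\hat\mu\in\mathbb R^p$: let $z_n=g_n-\hat\mu$, initial weights $w^{(1)}\in\Delta_{N,\epsilon}$, step sizes $\eta_w,\eta_\rho>0$, and $T\ge1$. For $t=1,\dots,T$: $S^{(t)}=\sum_n w^{(t)}_n z_nz_n^\top$; $\rho^{(t)}=\exp(\eta_\rho\sum_{t'=1}^t S^{(t')})/\mathrm{Tr}\exp(\eta_\rho\sum_{t'=1}^tS^{(t')})$; loss vector $m^{(t)}_n=z_n^\top\rho^{(t)}z_n$; $\tilde w^{(t)}_n=w^{(t)}_n(1-\eta_w m^{(t)}_n)$; $w^{(t+1)}=\arg\min_{w\in\Delta_{N,\epsilon}}\mathrm{RE}(w\|\tilde w^{(t)})$. *)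

theory Defs
  imports "HOL-Analysis.Analysis"
begin

text \<open>Matrices are real p x p matrices indexed by a finite type 'p; sample indices form a finite type 'n (N = CARD('n)).\<close>

definition mtrace :: "real^'p^'p \<Rightarrow> real" where
  "mtrace A = (\<Sum>i\<in>UNIV. A $ i $ i)"

definition frob_inner :: "real^'p^'p \<Rightarrow> real^'p^'p \<Rightarrow> real" where
  "frob_inner A B = mtrace (transpose A ** B)"

fun mpow :: "real^'p^'p \<Rightarrow> nat \<Rightarrow> real^'p^'p" where
  "mpow A 0 = mat 1"
| "mpow A (Suc k) = A ** mpow A k"

definition mexp :: "real^'p^'p \<Rightarrow> real^'p^'p" where
  "mexp A = (\<Sum>k. (1 / fact k) *\<^sub>R mpow A k)"

definition outer :: "real^'p \<Rightarrow> real^'p^'p" where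
  "outer x = (\<chi> i j. x $ i * x $ j)"

definition capped_simplex :: "real \<Rightarrow> (real^'n) set" where
  "capped_simplex \<epsilon> = {w. (\<Sum>n\<in>UNIV. w $ n) = 1 \<and>
      (\<forall>n. 0 \<le> w $ n \<and> w $ n \<le> 1 / ((1 - \<epsilon>) * real CARD('n)))}"

definition density_matrices :: "(real^'p^'p) set" where
  "density_matrices = {\<rho>. transpose \<rho> = \<rho> \<and> (\<forall>x. 0 \<le> x \<bullet> (\<rho> *v x)) \<and> mtrace \<rho> = 1}"

text \<open>Relative entropy; 0 log 0 = 0 holds since 0 * _ = 0.\<close>
definition RE :: "real^'n \<Rightarrow> real^'n \<Rightarrow> real" where
  "RE w v = (\<Sum>n\<in>UNIV. w $ n * ln (w $ n / v $ n))"

definition diam_sq :: "('n \<Rightarrow> real^'p) \<Rightarrow> real" where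
  "diam_sq g = Max {(norm (g i - g j))^2 | i j. True}"

definition S_mat :: "('n \<Rightarrow> real^'p) \<Rightarrow> real^'p \<Rightarrow> (nat \<Rightarrow> real^'n) \<Rightarrow> nat \<Rightarrow> real^'p^'p" where
  "S_mat g \<mu> w t = (\<Sum>n\<in>UNIV. (w t $ n) *\<^sub>R outer (g n - \<mu>))"

definition rho_mat :: "real \<Rightarrow> ('n \<Rightarrow> real^'p) \<Rightarrow> real^'p \<Rightarrow> (nat \<Rightarrow> real^'n) \<Rightarrow> nat \<Rightarrow> real^'p^'p" where
  "rho_mat \<eta>\<rho> g \<mu> w t =
     (let E = mexp (\<eta>\<rho> *\<^sub>R (\<Sum>t'\<in>{1..t}. S_mat g \<mu> w t')) in (1 / mtrace E) *\<^sub>R E)"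

definition loss :: "real \<Rightarrow> ('n \<Rightarrow> real^'p) \<Rightarrow> real^'p \<Rightarrow> (nat \<Rightarrow> real^'n) \<Rightarrow> nat \<Rightarrow> real^'n" where
  "loss \<eta>\<rho> g \<mu> w t = (\<chi> n. (g n - \<mu>) \<bullet> (rho_mat \<eta>\<rho> g \<mu> w t *v (g n - \<mu>)))"

definition w_tilde :: "real \<Rightarrow> real \<Rightarrow> ('n \<Rightarrow> real^'p) \<Rightarrow> real^'p \<Rightarrow> (nat \<Rightarrow> real^'n) \<Rightarrow> nat \<Rightarrow> real^'n" where
  "w_tilde \<eta>w \<eta>\<rho> g \<mu> w t = (\<chi> n. w t $ n * (1 - \<eta>w * loss \<eta>\<rho> g \<mu> w t $ n))"

definition mw_mmw_run :: "real \<Rightarrow> real \<Rightarrow> real \<Rightarrow> ('n \<Rightarrow> real^'p) \<Rightarrow> real^'p \<Rightarrow> nat \<Rightarrow> (nat \<Rightarrow> real^'n) \<Rightarrow> bool" where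
  "mw_mmw_run \<epsilon> \<eta>w \<eta>\<rho> g \<mu> T w \<longleftrightarrow>
     w 1 \<in> capped_simplex \<epsilon> \<and>
     (\<forall>t\<in>{1..T}. w (Suc t) \<in> capped_simplex \<epsilon> \<and>
        (\<forall>v\<in>capped_simplex \<epsilon>. RE (w (Suc t)) (w_tilde \<eta>w \<eta>\<rho> g \<mu> w t)
                                 \<le> RE v (w_tilde \<eta>w \<eta>\<rho> g \<mu> w t)))"

end

theory Submission
  imports Defs
begin

lemma outer_component[simp]: "outer x $ i $ j = x $ i * x $ j"
  by (simp add: outer_def)

lemma transpose_outer[simp]: "transpose (outer a) = outer a"
  by (simp add: transpose_def outer_def vec_eq_iff mult.commute)

lemma outer_mulv: "outer a *v x = (a \<bullet> x) *\<^sub>R a"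
  by (simp add: matrix_vector_mult_def vec_eq_iff inner_vec_def sum_distrib_left mult_ac)

lemma outer_mult: "outer a ** outer b = (a \<bullet> b) *\<^sub>R (\<chi> i j. a $ i * b $ j)"
  by (simp add: matrix_matrix_mult_def vec_eq_iff inner_vec_def sum_distrib_left sum_distrib_right mult_ac)

lemma mtrace_outer: "mtrace (outer a) = a \<bullet> a"
  by (simp add: mtrace_def inner_vec_def)

lemma mtrace_sum: "mtrace (\<Sum>i\<in>S. f i) = (\<Sum>i\<in>S. mtrace (f i))"
  unfolding mtrace_def by (simp add: sum_component) (rule sum.swap)

lemma mtrace_scaleR: "mtrace (c *\<^sub>R A) = c * mtrace A"
  unfolding mtrace_def by (simp add: sum_distrib_left)

lemma frob_inner_alt: "frob_inner A B = (\<Sum>i\<in>UNIV. \<Sum>j\<in>UNIV. A $ i $ j * B $ i $ j)"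
  unfolding frob_inner_def mtrace_def
  by (simp add: matrix_matrix_mult_def transpose_def) (rule sum.swap)

lemma frob_inner_sum_left: "frob_inner (\<Sum>n\<in>S. f n) B = (\<Sum>n\<in>S. frob_inner (f n) B)"
  unfolding frob_inner_alt by (simp add: sum_distrib_right sum_component sum.swap[of _ S UNIV])

lemma frob_inner_sum_right: "frob_inner B (\<Sum>n\<in>S. f n) = (\<Sum>n\<in>S. frob_inner B (f n))"
  unfolding frob_inner_alt by (simp add: sum_distrib_left sum_component sum.swap[of _ S UNIV])

lemma frob_inner_scaleR_left: "frob_inner (c *\<^sub>R A) B = c * frob_inner A B"
  unfolding frob_inner_alt by (simp add: sum_distrib_left mult_ac)

lemma frob_inner_scaleR_right: "frob_inner B (c *\<^sub>R A) = c * frob_inner B A"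
  unfolding frob_inner_alt by (simp add: sum_distrib_left mult_ac)

lemma frob_inner_diff_left: "frob_inner (A - C) B = frob_inner A B - frob_inner C B"
  unfolding frob_inner_alt by (simp add: left_diff_distrib sum_subtractf)

lemma frob_inner_outer_right: "frob_inner M (outer v) = v \<bullet> (M *v v)"
  unfolding frob_inner_alt
  by (simp add: inner_vec_def matrix_vector_mult_def sum_distrib_left mult_ac)

lemma frob_inner_outer_left: "frob_inner (outer v) M = v \<bullet> (M *v v)"
  unfolding frob_inner_alt
  by (simp add: inner_vec_def matrix_vector_mult_def sum_distrib_left mult_ac)

lemma sym_inner: "transpose A = A \<Longrightarrow> x \<bullet> (A *v y) = (A *v x) \<bullet> (y::real^'p)"
proof -
  assume a: "transpose A = A"
  have c: "A $ i $ j = A $ j $ i" for i j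
    using arg_cong[OF a, of "\<lambda>M. M $ i $ j"] by (simp add: transpose_def)
  have "x \<bullet> (A *v y) = (\<Sum>i\<in>UNIV. \<Sum>j\<in>UNIV. x $ i * A $ i $ j * y $ j)"
    by (simp add: inner_vec_def matrix_vector_mult_def sum_distrib_left mult_ac)
  also have "\<dots> = (\<Sum>j\<in>UNIV. \<Sum>i\<in>UNIV. x $ i * A $ i $ j * y $ j)"
    by (rule sum.swap)
  also have "\<dots> = (A *v x) \<bullet> y"
    by (simp add: inner_vec_def matrix_vector_mult_def sum_distrib_left c mult_ac)
  finally show ?thesis .
qed


definition spec_dec :: "real^'p^'p \<Rightarrow> ('p \<Rightarrow> real^'p) \<Rightarrow> ('p \<Rightarrow> real) \<Rightarrow> bool" where
  "spec_dec X v l \<longleftrightarrow> (\<forall>i j. v i \<bullet> v j = (if i = j then 1 else 0)) \<and>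
     (\<Sum>i\<in>UNIV. outer (v i)) = mat 1 \<and> X = (\<Sum>i\<in>UNIV. l i *\<^sub>R outer (v i))"

lemma sum_mulv: "(\<Sum>i\<in>S. f i) *v (x::real^'n) = (\<Sum>i\<in>S. f i *v x)"
  by (simp add: matrix_vector_mult_def vec_eq_iff sum_component sum_distrib_right)
     (intro allI sum.swap)

lemma scaleR_mulv: "(c *\<^sub>R A) *v (x::real^'n) = c *\<^sub>R (A *v x)"
  by (simp add: matrix_vector_mult_def vec_eq_iff sum_distrib_left mult_ac)

lemma mulv_sum: "(A::real^'n^'m) *v (\<Sum>i\<in>S. f i) = (\<Sum>i\<in>S. A *v f i)"
  by (simp add: matrix_vector_mult_def vec_eq_iff sum_component sum_distrib_left)
     (intro allI sum.swap)

lemma mulv_scaleR: "(A::real^'n^'m) *v (c *\<^sub>R x) = c *\<^sub>R (A *v x)"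
  by (simp add: matrix_vector_mult_def vec_eq_iff sum_distrib_left mult_ac)

lemma comb_mulv: "(\<Sum>i\<in>S. c i *\<^sub>R outer (v i)) *v x = (\<Sum>i\<in>S. (c i * (v i \<bullet> x)) *\<^sub>R v i)"
  by (simp add: sum_mulv scaleR_mulv outer_mulv)

lemma spec_orth: "spec_dec X v l \<Longrightarrow> v i \<bullet> v j = (if i = j then 1 else 0)"
  by (simp add: spec_dec_def)

lemma spec_expand: assumes "spec_dec X v l" shows "x = (\<Sum>i\<in>UNIV. (v i \<bullet> x) *\<^sub>R v i)"
proof -
  have "x = mat 1 *v x" by simp
  also have "\<dots> = (\<Sum>i\<in>UNIV. outer (v i)) *v x" using assms by (simp add: spec_dec_def)
  also have "\<dots> = (\<Sum>i\<in>UNIV. (v i \<bullet> x) *\<^sub>R v i)" by (simp add: sum_mulv outer_mulv)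
  finally show ?thesis .
qed

lemma spec_parseval: assumes "spec_dec X v l" shows "(\<Sum>i\<in>UNIV. (v i \<bullet> x)^2) = x \<bullet> x"
proof -
  have "x \<bullet> x = x \<bullet> (\<Sum>i\<in>UNIV. (v i \<bullet> x) *\<^sub>R v i)" using spec_expand[OF assms, of x] by simp
  also have "\<dots> = (\<Sum>i\<in>UNIV. (v i \<bullet> x)^2)"
    by (simp add: inner_sum_right power2_eq_square inner_commute)
  finally show ?thesis by simp
qed

lemma comb_apply_basis:
  assumes "spec_dec X v l"
  shows "(\<Sum>i\<in>UNIV. c i *\<^sub>R outer (v i)) *v v j = c j *\<^sub>R v j"
proof -
  have "(\<Sum>i\<in>UNIV. c i *\<^sub>R outer (v i)) *v v j = (\<Sum>i\<in>UNIV. (c i * (v i \<bullet> v j)) *\<^sub>R v i)"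
    by (rule comb_mulv)
  also have "\<dots> = (\<Sum>i\<in>UNIV. (if i = j then c j *\<^sub>R v j else 0))"
    by (rule sum.cong) (auto simp: spec_orth[OF assms])
  finally show ?thesis by simp
qed

lemma spec_mpow_mulv:
  assumes "spec_dec X v l"
  shows "mpow X k *v x = (\<Sum>i\<in>UNIV. (l i ^ k * (v i \<bullet> x)) *\<^sub>R v i)"
proof (induction k arbitrary: x)
  case 0
  then show ?case using spec_expand[OF assms, of x] by simp
next
  case (Suc k)
  have X: "X = (\<Sum>i\<in>UNIV. l i *\<^sub>R outer (v i))" using assms by (simp add: spec_dec_def)
  have "mpow X (Suc k) *v x = X *v (mpow X k *v x)"
    by (simp add: matrix_vector_mul_assoc)
  also have "\<dots> = X *v (\<Sum>i\<in>UNIV. (l i ^ k * (v i \<bullet> x)) *\<^sub>R v i)" using Suc by simp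
  also have "\<dots> = (\<Sum>i\<in>UNIV. (l i ^ k * (v i \<bullet> x)) *\<^sub>R (X *v v i))"
    by (simp add: mulv_sum mulv_scaleR)
  also have "\<dots> = (\<Sum>i\<in>UNIV. (l i ^ Suc k * (v i \<bullet> x)) *\<^sub>R v i)"
    by (rule sum.cong) (auto simp: X comb_apply_basis[OF assms] mult_ac)
  finally show ?case .
qed

lemma spec_mpow:
  assumes "spec_dec X v l"
  shows "mpow X k = (\<Sum>i\<in>UNIV. (l i ^ k) *\<^sub>R outer (v i))"
  unfolding matrix_eq
  by (simp add: spec_mpow_mulv[OF assms] comb_mulv)

lemma spec_mexp:
  assumes "spec_dec X v l"
  shows "mexp X = (\<Sum>i\<in>UNIV. exp (l i) *\<^sub>R outer (v i))"
proof -
  have eq: "(\<lambda>k. (1 / fact k) *\<^sub>R mpow X k) = (\<lambda>k. \<Sum>i\<in>UNIV. (l i ^ k /\<^sub>R fact k) *\<^sub>R outer (v i))"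
    by (rule ext) (simp add: spec_mpow[OF assms] scaleR_sum_right divide_inverse mult_ac)
  have "(\<lambda>k. \<Sum>i\<in>UNIV. (l i ^ k /\<^sub>R fact k) *\<^sub>R outer (v i)) sums (\<Sum>i\<in>UNIV. exp (l i) *\<^sub>R outer (v i))"
    by (intro sums_sum sums_scaleR_left exp_converges)
  then show ?thesis unfolding mexp_def eq by (rule sums_unique[symmetric])
qed

lemma spec_dec_mexp: "spec_dec X v l \<Longrightarrow> spec_dec (mexp X) v (\<lambda>i. exp (l i))"
  using spec_mexp[of X v l] by (simp add: spec_dec_def)

lemma mtrace_comb:
  assumes "spec_dec X v l"
  shows "mtrace (\<Sum>i\<in>UNIV. c i *\<^sub>R outer (v i)) = (\<Sum>i\<in>UNIV. c i)"
  by (simp add: mtrace_sum mtrace_scaleR mtrace_outer spec_orth[OF assms])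

lemma quad_comb:
  "x \<bullet> ((\<Sum>i\<in>UNIV. c i *\<^sub>R outer (v i)) *v x) = (\<Sum>i\<in>UNIV. c i * (v i \<bullet> x)^2)"
  by (simp add: comb_mulv inner_sum_right power2_eq_square inner_commute mult_ac)

lemma spec_quad: "spec_dec X v l \<Longrightarrow> x \<bullet> (X *v x) = (\<Sum>i\<in>UNIV. l i * (v i \<bullet> x)^2)"
  by (simp add: spec_dec_def quad_comb del: )


lemma quad_zero:
  fixes a b :: real
  assumes "\<And>t. 2 * t * a + t^2 * b \<le> 0"
  shows "a = 0"
proof (rule ccontr)
  assume "a \<noteq> 0"
  define t where "t = a / (\<bar>b\<bar> + 1)"
  have pos: "\<bar>b\<bar> + 1 > 0" by simp
  have "2 * t * a + t^2 * b \<le> 0" by (rule assms)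
  then have "(2 * t * a + t^2 * b) * (\<bar>b\<bar> + 1)^2 \<le> 0"
    using pos by (simp add: mult_nonpos_nonneg)
  moreover have "(2 * t * a + t^2 * b) * (\<bar>b\<bar> + 1)^2 = a^2 * (2 * (\<bar>b\<bar> + 1) + b)"
  proof -
    have ta: "t * (\<bar>b\<bar> + 1) = a" unfolding t_def using pos by simp
    have "(2 * t * a + t^2 * b) * (\<bar>b\<bar> + 1)^2 = 2 * a * (t * (\<bar>b\<bar> + 1)) * (\<bar>b\<bar> + 1) + (t * (\<bar>b\<bar> + 1))^2 * b"
      by (simp add: algebra_simps power2_eq_square)
    also have "\<dots> = a^2 * (2 * (\<bar>b\<bar> + 1) + b)" unfolding ta by (simp add: algebra_simps power2_eq_square)
    finally show ?thesis .
  qed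
  moreover have "a^2 * (2 * (\<bar>b\<bar> + 1) + b) > 0"
    using \<open>a \<noteq> 0\<close> by (intro mult_pos_pos) (auto simp: abs_if)
  ultimately show False by linarith
qed

definition orthonormal_set :: "(real^'p) set \<Rightarrow> bool" where
  "orthonormal_set B \<longleftrightarrow> (\<forall>b\<in>B. \<forall>b'\<in>B. b \<bullet> b' = (if b = b' then 1 else 0))"

lemma eig_step:
  fixes X :: "real^'p^'p"
  assumes sym: "transpose X = X" and fin: "finite B" and on: "orthonormal_set B"
    and eig: "\<forall>b\<in>B. \<exists>c. X *v b = c *\<^sub>R b" and sp: "span B \<noteq> UNIV"
  shows "\<exists>e. e \<bullet> e = 1 \<and> (\<forall>b\<in>B. e \<bullet> b = 0) \<and> (\<exists>c. X *v e = c *\<^sub>R e)"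
proof -
  define V where "V = {x::real^'p. \<forall>b\<in>B. x \<bullet> b = 0}"
  have subV: "subspace V"
    unfolding V_def subspace_def by (auto simp: inner_add_left)
  obtain y where y: "y \<notin> span B" using sp by auto
  define x0 where "x0 = y - (\<Sum>b\<in>B. (y \<bullet> b) *\<^sub>R b)"
  have x0V: "x0 \<in> V"
  proof -
    have "x0 \<bullet> b' = 0" if "b' \<in> B" for b'
    proof -
      have "(\<Sum>b\<in>B. (y \<bullet> b) *\<^sub>R b) \<bullet> b' = (\<Sum>b\<in>B. (y \<bullet> b) * (b \<bullet> b'))"
        by (simp add: inner_sum_left)
      also have "\<dots> = (\<Sum>b\<in>B. if b = b' then y \<bullet> b' else 0)"
        by (rule sum.cong) (use on that in \<open>auto simp: orthonormal_set_def\<close>)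
      also have "\<dots> = y \<bullet> b'" using fin that by simp
      finally show ?thesis by (simp add: x0_def inner_diff_left)
    qed
    then show ?thesis by (simp add: V_def)
  qed
  have x0nz: "x0 \<noteq> 0"
  proof
    assume "x0 = 0"
    then have "y = (\<Sum>b\<in>B. (y \<bullet> b) *\<^sub>R b)" by (simp add: x0_def)
    moreover have "(\<Sum>b\<in>B. (y \<bullet> b) *\<^sub>R b) \<in> span B"
      by (intro span_sum span_scale span_base) auto
    ultimately show False using y by simp
  qed
  define K where "K = V \<inter> sphere 0 1"
  have cK: "compact K" unfolding K_def
    by (intro closed_Int_compact closed_subspace subV compact_sphere)
  have u0: "x0 /\<^sub>R norm x0 \<in> K"
    using x0V x0nz subV by (auto simp: K_def subspace_scale)
  have cont: "continuous_on K (\<lambda>x. x \<bullet> (X *v x))"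
    by (intro continuous_intros linear_continuous_on matrix_vector_mul_bounded_linear)
  obtain e where eK: "e \<in> K" and emax: "\<forall>x\<in>K. x \<bullet> (X *v x) \<le> e \<bullet> (X *v e)"
    using continuous_attains_sup[OF cK _ cont] u0 by blast
  define lam where "lam = e \<bullet> (X *v e)"
  have eV: "e \<in> V" and ee: "e \<bullet> e = 1" using eK by (auto simp: K_def norm_eq_1)
  have Q: "x \<bullet> (X *v x) \<le> lam * (x \<bullet> x)" if "x \<in> V" for x
  proof (cases "x = 0")
    case True then show ?thesis by simp
  next
    case False
    define u where "u = x /\<^sub>R norm x"
    have "u \<in> K" using that False subV by (auto simp: K_def u_def subspace_scale)
    then have "u \<bullet> (X *v u) \<le> lam" using emax lam_def by blast
    moreover have "u \<bullet> (X *v u) = (x \<bullet> (X *v x)) / (norm x)^2"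
      by (simp add: u_def mulv_scaleR power2_eq_square divide_inverse mult_ac)
    moreover have "x \<bullet> x = (norm x)^2" by (simp add: power2_norm_eq_inner)
    moreover have "(norm x)^2 > 0" using False by simp
    ultimately show ?thesis by (simp add: divide_le_eq mult.commute)
  qed
  have orth: "h \<bullet> (X *v e) - lam * (h \<bullet> e) = 0" if hV: "h \<in> V" for h
  proof (rule quad_zero)
    fix t :: real
    have "e + t *\<^sub>R h \<in> V" using eV hV subV by (simp add: subspace_add subspace_scale)
    then have q: "(e + t *\<^sub>R h) \<bullet> (X *v (e + t *\<^sub>R h)) \<le> lam * ((e + t *\<^sub>R h) \<bullet> (e + t *\<^sub>R h))"
      by (rule Q)
    have s: "e \<bullet> (X *v h) = h \<bullet> (X *v e)"
      using sym_inner[OF sym, of e h] by (simp add: inner_commute)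
    have A: "(e + t *\<^sub>R h) \<bullet> (X *v (e + t *\<^sub>R h)) = lam + 2 * t * (h \<bullet> (X *v e)) + t^2 * (h \<bullet> (X *v h))"
      by (simp add: matrix_vector_right_distrib mulv_scaleR inner_add_left inner_add_right s lam_def power2_eq_square algebra_simps)
    have B: "(e + t *\<^sub>R h) \<bullet> (e + t *\<^sub>R h) = 1 + 2 * t * (h \<bullet> e) + t^2 * (h \<bullet> h)"
      by (simp add: inner_add_left inner_add_right ee inner_commute power2_eq_square algebra_simps)
    show "2 * t * (h \<bullet> (X *v e) - lam * (h \<bullet> e)) + t^2 * (h \<bullet> (X *v h) - lam * (h \<bullet> h)) \<le> 0"
    proof -
      have "lam + 2 * t * (h \<bullet> (X *v e)) + t^2 * (h \<bullet> (X *v h)) \<le> lam * (1 + 2 * t * (h \<bullet> e) + t^2 * (h \<bullet> h))"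
        using q unfolding A B .
      then show ?thesis by (simp add: ring_distribs mult_ac)
    qed
  qed
  define r where "r = X *v e - lam *\<^sub>R e"
  have rV: "r \<in> V"
  proof -
    have "r \<bullet> b = 0" if bB: "b \<in> B" for b
    proof -
      obtain c where c: "X *v b = c *\<^sub>R b" using bspec[OF eig bB] by (elim exE)
      have "(X *v e) \<bullet> b = e \<bullet> (X *v b)" using sym_inner[OF sym, of e b] by simp
      also have "\<dots> = 0" using eV bB by (simp add: c V_def)
      finally show ?thesis using eV bB by (simp add: r_def inner_diff_left V_def)
    qed
    then show ?thesis by (simp add: V_def)
  qed
  have "r \<bullet> r = 0"
    using orth[OF rV] by (simp add: r_def inner_diff_right inner_commute algebra_simps)
  then have "X *v e = lam *\<^sub>R e" by (simp add: r_def)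
  moreover have "\<forall>b\<in>B. e \<bullet> b = 0" using eV by (simp add: V_def)
  ultimately show ?thesis using ee by blast
qed


lemma greedy:
  fixes X :: "real^'p^'p"
  assumes sym: "transpose X = X"
  shows "k \<le> CARD('p) \<Longrightarrow> \<exists>B. finite B \<and> card B = k \<and> orthonormal_set B \<and> (\<forall>b\<in>B. \<exists>c. X *v b = c *\<^sub>R b)"
proof (induction k)
  case 0
  show ?case by (rule exI[of _ "{}"]) (simp add: orthonormal_set_def)
next
  case (Suc k)
  then obtain B where fin: "finite B" and cB: "card B = k" and on: "orthonormal_set B"
    and eig: "\<forall>b\<in>B. \<exists>c. X *v b = c *\<^sub>R b" by auto
  have sp: "span B \<noteq> UNIV"
  proof
    assume spU: "span B = UNIV"
    have "pairwise orthogonal B" using on by (auto simp: orthonormal_set_def pairwise_def orthogonal_def)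
    moreover have "0 \<notin> B" using on unfolding orthonormal_set_def by (metis inner_zero_left zero_neq_one)
    ultimately have ind: "independent B" by (rule pairwise_orthogonal_independent)
    have "card B = dim (span B)" using indep_card_eq_dim_span[OF ind] by simp
    also have "\<dots> = CARD('p)" using spU by simp
    finally show False using cB Suc.prems by simp
  qed
  obtain e where ee: "e \<bullet> e = 1" and eo: "\<forall>b\<in>B. e \<bullet> b = 0" and ec: "\<exists>c. X *v e = c *\<^sub>R e"
    using eig_step[OF sym fin on eig sp] by blast
  have eB: "e \<notin> B" using ee eo by auto
  show ?case
  proof (intro exI conjI)
    show "finite (insert e B)" using fin by simp
    show "card (insert e B) = Suc k" using fin eB cB by simp
    show "orthonormal_set (insert e B)"
      using on ee eo eB by (auto simp: orthonormal_set_def inner_commute)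
    show "\<forall>b\<in>insert e B. \<exists>c. X *v b = c *\<^sub>R b" using eig ec by auto
  qed
qed

theorem spectral:
  fixes X :: "real^'p^'p"
  assumes sym: "transpose X = X"
  shows "\<exists>v l. spec_dec X v l"
proof -
  obtain B where fin: "finite B" and cB: "card B = CARD('p)" and on: "orthonormal_set B"
    and eig: "\<forall>b\<in>B. \<exists>c. X *v b = c *\<^sub>R b"
    using greedy[OF sym, of "CARD('p)"] by auto
  have po: "pairwise orthogonal B" using on by (auto simp: orthonormal_set_def pairwise_def orthogonal_def)
  have n1: "norm b = 1" if "b \<in> B" for b
    using on that by (auto simp: orthonormal_set_def norm_eq_1)
  have "0 \<notin> B" using on unfolding orthonormal_set_def by (metis inner_zero_left zero_neq_one)
  with po have ind: "independent B" by (rule pairwise_orthogonal_independent)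
  have spU: "UNIV \<subseteq> span B"
    using card_eq_dim[of B UNIV] ind fin cB by simp
  obtain f where bij: "bij_betw f (UNIV::'p set) B"
    using finite_same_card_bij[of "UNIV::'p set" B] fin cB by auto
  define l where "l i = f i \<bullet> (X *v f i)" for i
  have fB: "f i \<in> B" for i using bij by (auto simp: bij_betw_def)
  have orth: "f i \<bullet> f j = (if i = j then 1 else 0)" for i j
  proof (cases "i = j")
    case True then show ?thesis using on fB by (auto simp: orthonormal_set_def)
  next
    case False
    then have "f i \<noteq> f j" using bij by (auto simp: bij_betw_def inj_on_def)
    then show ?thesis using on fB False by (auto simp: orthonormal_set_def)
  qed
  have eigf: "X *v f i = l i *\<^sub>R f i" for i
  proof -
    obtain c where c: "X *v f i = c *\<^sub>R f i" using eig fB by blast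
    then have "l i = c" using orth[of i i] by (simp add: l_def)
    then show ?thesis using c by simp
  qed
  have expand: "(\<Sum>i\<in>UNIV. (f i \<bullet> x) *\<^sub>R f i) = x" for x
  proof -
    have "(\<Sum>i\<in>UNIV. (f i \<bullet> x) *\<^sub>R f i) = (\<Sum>b\<in>B. (b \<bullet> x) *\<^sub>R b)"
      using sum.reindex_bij_betw[OF bij, of "\<lambda>b. (b \<bullet> x) *\<^sub>R b"] by simp
    also have "\<dots> = (\<Sum>b\<in>B. (x \<bullet> b) *\<^sub>R b)" by (simp add: inner_commute)
    also have "\<dots> = x" using orthonormal_basis_expand[OF po n1 _ fin] spU by auto
    finally show ?thesis .
  qed
  have res: "(\<Sum>i\<in>UNIV. outer (f i)) = mat 1"
    unfolding matrix_eq by (simp add: sum_mulv outer_mulv expand)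
  have dec: "X = (\<Sum>i\<in>UNIV. l i *\<^sub>R outer (f i))"
    unfolding matrix_eq
  proof
    fix x
    have "X *v x = X *v (\<Sum>i\<in>UNIV. (f i \<bullet> x) *\<^sub>R f i)" by (simp add: expand)
    also have "\<dots> = (\<Sum>i\<in>UNIV. (l i * (f i \<bullet> x)) *\<^sub>R f i)"
      by (simp add: mulv_sum mulv_scaleR eigf mult_ac)
    also have "\<dots> = (\<Sum>i\<in>UNIV. l i *\<^sub>R outer (f i)) *v x" by (simp add: comb_mulv)
    finally show "X *v x = (\<Sum>i\<in>UNIV. l i *\<^sub>R outer (f i)) *v x" .
  qed
  show ?thesis unfolding spec_dec_def using orth res dec by blast
qed


lemma jensen_ln:
  fixes c y :: "'a \<Rightarrow> real"
  assumes "finite S" "S \<noteq> {}" "\<And>i. i \<in> S \<Longrightarrow> c i \<ge> 0" "(\<Sum>i\<in>S. c i) = 1"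
  shows "(\<Sum>i\<in>S. c i * y i) \<le> ln (\<Sum>i\<in>S. c i * exp (y i))"
proof -
  have "exp (\<Sum>i\<in>S. c i *\<^sub>R y i) \<le> (\<Sum>i\<in>S. c i * exp (y i))"
    by (rule convex_on_sum[OF assms(1,2) exp_convex assms(4) assms(3)]) auto
  then have "exp (\<Sum>i\<in>S. c i * y i) \<le> (\<Sum>i\<in>S. c i * exp (y i))" by simp
  then show ?thesis by (metis exp_gt_zero ln_exp ln_le_cancel_iff order_less_le_trans)
qed

lemma sum_pos_weights:
  fixes c a :: "'a::finite \<Rightarrow> real"
  assumes "\<And>i. c i \<ge> 0" "(\<Sum>i\<in>UNIV. c i) = 1" "\<And>i. a i > 0"
  shows "(\<Sum>i\<in>UNIV. c i * a i) > 0"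
proof -
  obtain i where "c i \<noteq> 0" using assms(2) by (metis (no_types, lifting) sum.neutral zero_neq_one)
  then have "c i > 0" using assms(1)[of i] by simp
  then show ?thesis
  proof (intro sum_pos2[of UNIV i])
    show "0 < c i * a i" using \<open>c i > 0\<close> assms(3)[of i] by simp
    show "0 \<le> c j * a j" for j using assms(1)[of j] assms(3)[of j] by simp
  qed auto
qed

lemma quad_exp:
  assumes Y: "spec_dec Y u y" and vv: "v \<bullet> v = 1"
  shows "v \<bullet> (mexp Y *v v) = (\<Sum>i\<in>UNIV. (u i \<bullet> v)^2 * exp (y i))"
    and "v \<bullet> (mexp Y *v v) > 0"
    and "v \<bullet> (Y *v v) \<le> ln (v \<bullet> (mexp Y *v v))"
proof -
  have c1: "(\<Sum>i\<in>UNIV. (u i \<bullet> v)^2) = 1" using spec_parseval[OF Y, of v] vv by simp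
  show e: "v \<bullet> (mexp Y *v v) = (\<Sum>i\<in>UNIV. (u i \<bullet> v)^2 * exp (y i))"
    using spec_quad[OF spec_dec_mexp[OF Y], of v] by (simp add: mult_ac)
  show "v \<bullet> (mexp Y *v v) > 0" unfolding e
    by (rule sum_pos_weights) (auto simp: c1)
  have "v \<bullet> (Y *v v) = (\<Sum>i\<in>UNIV. (u i \<bullet> v)^2 * y i)"
    using spec_quad[OF Y, of v] by (simp add: mult_ac)
  also have "\<dots> \<le> ln (\<Sum>i\<in>UNIV. (u i \<bullet> v)^2 * exp (y i))"
    by (rule jensen_ln) (auto simp: c1)
  finally show "v \<bullet> (Y *v v) \<le> ln (v \<bullet> (mexp Y *v v))" using e by simp
qed

lemma spec_basis_unit: "spec_dec X v l \<Longrightarrow> v i \<bullet> v i = 1"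
  by (simp add: spec_orth)

lemma spec_eig: "spec_dec X v l \<Longrightarrow> X *v v j = l j *\<^sub>R v j"
  using comb_apply_basis[of X v l l j] by (simp add: spec_dec_def)

lemma spec_eigval: "spec_dec X v l \<Longrightarrow> v j \<bullet> (X *v v j) = l j"
  by (simp add: spec_eig spec_orth)

lemma spec_trace_mexp: "spec_dec X v l \<Longrightarrow> mtrace (mexp X) = (\<Sum>i\<in>UNIV. exp (l i))"
  by (simp add: spec_mexp mtrace_comb)

lemma spec_trace: "spec_dec X v l \<Longrightarrow> mtrace X = (\<Sum>i\<in>UNIV. l i)"
  using mtrace_comb[of X v l l] by (simp add: spec_dec_def)

lemma sum_cross:
  assumes X: "spec_dec X v x" and Y: "spec_dec Y u y"
  shows "(\<Sum>j\<in>UNIV. v j \<bullet> (mexp Y *v v j)) = mtrace (mexp Y)"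
proof -
  have "(\<Sum>j\<in>UNIV. v j \<bullet> (mexp Y *v v j)) = (\<Sum>j\<in>UNIV. \<Sum>i\<in>UNIV. (u i \<bullet> v j)^2 * exp (y i))"
    using quad_exp(1)[OF Y spec_basis_unit[OF X]] by simp
  also have "\<dots> = (\<Sum>i\<in>UNIV. exp (y i) * (\<Sum>j\<in>UNIV. (v j \<bullet> u i)^2))"
    by (subst sum.swap) (simp add: sum_distrib_left inner_commute mult_ac)
  also have "\<dots> = (\<Sum>i\<in>UNIV. exp (y i))"
    using spec_parseval[OF X] spec_basis_unit[OF Y] by simp
  finally show ?thesis using spec_trace_mexp[OF Y] by simp
qed

definition GG :: "real^'p^'p \<Rightarrow> real" where
  "GG X = ln (mtrace (mexp X))"

definition rhoX :: "real^'p^'p \<Rightarrow> real^'p^'p" where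
  "rhoX X = (1 / mtrace (mexp X)) *\<^sub>R mexp X"

lemma rhoX_dec:
  assumes X: "spec_dec X v x"
  shows "rhoX X = (\<Sum>j\<in>UNIV. (exp (x j) / (\<Sum>i\<in>UNIV. exp (x i))) *\<^sub>R outer (v j))"
  unfolding rhoX_def spec_trace_mexp[OF X] by (simp add: spec_mexp[OF X] scaleR_sum_right)

lemma trace_mexp_pos: "spec_dec X v x \<Longrightarrow> (\<Sum>i\<in>UNIV. exp (x i)) > 0"
  by (simp add: sum_pos)

lemma key_convex:
  fixes X Y :: "real^'p^'p"
  assumes sX: "transpose X = X" and sY: "transpose Y = Y"
  shows "frob_inner (Y - X) (rhoX X) \<le> GG Y - GG X"
proof -
  obtain v x where X: "spec_dec X v x" using spectral[OF sX] by blast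
  obtain u y where Y: "spec_dec Y u y" using spectral[OF sY] by blast
  define Z where "Z = (\<Sum>i\<in>UNIV. exp (x i))"
  have Zp: "Z > 0" unfolding Z_def using trace_mexp_pos[OF X] .
  define s where "s j = exp (x j) / Z" for j
  define a where "a j = v j \<bullet> (mexp Y *v v j)" for j
  have ap: "a j > 0" for j unfolding a_def using quad_exp(2)[OF Y spec_basis_unit[OF X]] .
  have sn: "s j \<ge> 0" for j using Zp by (simp add: s_def)
  have s1: "(\<Sum>j\<in>UNIV. s j) = 1" using Zp by (simp add: s_def Z_def flip: sum_divide_distrib)
  have "frob_inner (Y - X) (rhoX X) = (\<Sum>j\<in>UNIV. s j * (v j \<bullet> ((Y - X) *v v j)))"
    by (simp add: rhoX_dec[OF X] frob_inner_sum_right frob_inner_scaleR_right frob_inner_outer_right s_def Z_def)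
  also have "\<dots> = (\<Sum>j\<in>UNIV. s j * (v j \<bullet> (Y *v v j) - x j))"
    by (simp add: matrix_vector_mult_diff_rdistrib inner_diff_right spec_eigval[OF X])
  also have "\<dots> \<le> (\<Sum>j\<in>UNIV. s j * (ln (a j) - x j))"
    by (intro sum_mono mult_left_mono sn) (simp add: a_def quad_exp(3)[OF Y spec_basis_unit[OF X]])
  also have "\<dots> \<le> ln (\<Sum>j\<in>UNIV. s j * exp (ln (a j) - x j))"
    by (rule jensen_ln) (auto simp: sn s1)
  also have "(\<Sum>j\<in>UNIV. s j * exp (ln (a j) - x j)) = (\<Sum>j\<in>UNIV. a j) / Z"
    using ap by (simp add: s_def exp_diff sum_divide_distrib)
  also have "(\<Sum>j\<in>UNIV. a j) = mtrace (mexp Y)" unfolding a_def by (rule sum_cross[OF X Y])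
  also have "ln (mtrace (mexp Y) / Z) = GG Y - GG X"
  proof -
    have "mtrace (mexp Y) > 0" using spec_trace_mexp[OF Y] trace_mexp_pos[OF Y] by simp
    then show ?thesis using Zp by (simp add: GG_def ln_div spec_trace_mexp[OF X] Z_def)
  qed
  finally show ?thesis .
qed

lemma density_bound:
  fixes X :: "real^'p^'p"
  assumes sX: "transpose X = X" and rho: "\<rho> \<in> density_matrices"
  shows "frob_inner X \<rho> \<le> GG X"
proof -
  obtain v x where X: "spec_dec X v x" using spectral[OF sX] by blast
  have sR: "transpose \<rho> = \<rho>" using rho by (simp add: density_matrices_def)
  obtain w r where R: "spec_dec \<rho> w r" using spectral[OF sR] by blast
  have rn: "r j \<ge> 0" for j
  proof -
    have "0 \<le> w j \<bullet> (\<rho> *v w j)" using rho by (simp add: density_matrices_def)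
    then show ?thesis using spec_eigval[OF R, of j] by simp
  qed
  have r1: "(\<Sum>j\<in>UNIV. r j) = 1" using rho spec_trace[OF R] by (simp add: density_matrices_def)
  have rle: "r j \<le> 1" for j
    using member_le_sum[of j UNIV r] rn r1 by simp
  define a where "a j = w j \<bullet> (mexp X *v w j)" for j
  have ap: "a j > 0" for j unfolding a_def using quad_exp(2)[OF X spec_basis_unit[OF R]] .
  have rdec: "\<rho> = (\<Sum>j\<in>UNIV. r j *\<^sub>R outer (w j))" using R by (simp add: spec_dec_def)
  have "frob_inner X \<rho> = (\<Sum>j\<in>UNIV. r j * (w j \<bullet> (X *v w j)))"
    by (subst rdec) (simp add: frob_inner_sum_right frob_inner_scaleR_right frob_inner_outer_right)
  also have "\<dots> \<le> (\<Sum>j\<in>UNIV. r j * ln (a j))"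
    by (intro sum_mono mult_left_mono rn) (simp add: a_def quad_exp(3)[OF X spec_basis_unit[OF R]])
  also have "\<dots> \<le> ln (\<Sum>j\<in>UNIV. r j * exp (ln (a j)))"
    by (rule jensen_ln) (auto simp: rn r1)
  also have "\<dots> = ln (\<Sum>j\<in>UNIV. r j * a j)" using ap by simp
  also have "\<dots> \<le> ln (\<Sum>j\<in>UNIV. a j)"
  proof -
    have "(\<Sum>j\<in>UNIV. r j * a j) > 0" by (rule sum_pos_weights) (auto simp: rn r1 ap)
    moreover have "(\<Sum>j\<in>UNIV. r j * a j) \<le> (\<Sum>j\<in>UNIV. a j)"
      by (intro sum_mono) (metis ap less_imp_le mult_left_le_one_le rle rn mult.commute mult_right_le_one_le)
    ultimately show ?thesis by simp
  qed
  also have "(\<Sum>j\<in>UNIV. a j) = mtrace (mexp X)" unfolding a_def by (rule sum_cross[OF R X])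
  finally show ?thesis by (simp add: GG_def)
qed

lemma rhoX_quad:
  fixes X :: "real^'p^'p"
  assumes sX: "transpose X = X"
  shows "0 \<le> z \<bullet> (rhoX X *v z)" and "z \<bullet> (rhoX X *v z) \<le> z \<bullet> z"
proof -
  obtain v x where X: "spec_dec X v x" using spectral[OF sX] by blast
  define Z where "Z = (\<Sum>i\<in>UNIV. exp (x i))"
  have Zp: "Z > 0" unfolding Z_def using trace_mexp_pos[OF X] .
  have sle: "exp (x j) / Z \<le> 1" for j
    using member_le_sum[of j UNIV "\<lambda>i. exp (x i)"] Zp by (simp add: Z_def)
  have q: "z \<bullet> (rhoX X *v z) = (\<Sum>j\<in>UNIV. (exp (x j) / Z) * (v j \<bullet> z)^2)"
    by (simp add: rhoX_dec[OF X] quad_comb Z_def)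
  show "0 \<le> z \<bullet> (rhoX X *v z)" unfolding q using Zp by (intro sum_nonneg) simp
  have "(\<Sum>j\<in>UNIV. (exp (x j) / Z) * (v j \<bullet> z)^2) \<le> (\<Sum>j\<in>UNIV. (v j \<bullet> z)^2)"
    by (intro sum_mono mult_left_le_one_le) (auto simp: sle Zp less_imp_le)
  then show "z \<bullet> (rhoX X *v z) \<le> z \<bullet> z" unfolding q spec_parseval[OF X] .
qed

lemma GG_zero: "GG (0::real^'p^'p) = ln (real CARD('p))"
proof -
  obtain v x where X: "spec_dec (0::real^'p^'p) v x" using spectral[of "0::real^'p^'p"] by (auto simp: transpose_def vec_eq_iff)
  have "x j = 0" for j using spec_eigval[OF X, of j] by simp
  then show ?thesis by (simp add: GG_def spec_trace_mexp[OF X])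
qed


lemma ln_one_minus_lower:
  fixes x :: real
  assumes "0 \<le> x" "x \<le> 1/2"
  shows "- x - x^2 \<le> ln (1 - x)"
proof -
  define g where "g t = ln (1 - t) + t + t^2" for t :: real
  define g' where "g' t = - 1 / (1 - t) + 1 + 2 * t" for t :: real
  have "g 0 \<le> g x"
  proof (rule deriv_nonneg_imp_mono[of 0 x g g'])
    fix t assume t: "t \<in> {0..x}"
    then have t1: "t < 1" using assms by simp
    show "(g has_real_derivative g' t) (at t)"
      unfolding g_def g'_def using t1
      by (auto intro!: derivative_eq_intros simp: power2_eq_square field_simps)
    have "g' t = t * (1 - 2 * t) / (1 - t)" using t1 by (simp add: g'_def field_simps)
    moreover have "t * (1 - 2 * t) \<ge> 0" using t assms by auto
    ultimately show "g' t \<ge> 0" using t1 by simp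
  qed (use assms in simp)
  then show ?thesis by (simp add: g_def)
qed

lemma term_bound:
  fixes x y c :: real
  assumes x: "x > 0" and y: "y \<ge> 0" and c: "c > 0"
  shows "y * ln (y / c) - x * ln (x / c) \<le> (ln (x / c) + 1) * (y - x) + (y - x)^2 / x"
proof (cases "y = 0")
  case True
  then show ?thesis using x by (simp add: power2_eq_square field_simps)
next
  case False
  then have yp: "y > 0" using y by simp
  have sp: "ln (y / c) = ln (y / x) + ln (x / c)"
    using x yp c by (simp add: ln_div)
  have L: "ln (y / x) \<le> y / x - 1" using ln_le_minus_one[of "y / x"] x yp by simp
  have "y * ln (y / x) \<le> y * (y / x - 1)" using L yp by (simp add: mult_left_mono)
  moreover have "y * (y / x - 1) = (y - x) + (y - x)^2 / x"
    using x by (simp add: power2_eq_square field_simps)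
  ultimately show ?thesis unfolding sp by (simp add: algebra_simps)
qed

lemma cs_sum: "w \<in> capped_simplex \<epsilon> \<Longrightarrow> (\<Sum>n\<in>UNIV. w $ n) = 1"
  by (simp add: capped_simplex_def)

lemma cs_nonneg: "w \<in> capped_simplex \<epsilon> \<Longrightarrow> 0 \<le> w $ n"
  by (simp add: capped_simplex_def)

lemma cs_cap: "w \<in> capped_simplex \<epsilon> \<Longrightarrow> w $ n \<le> 1 / ((1 - \<epsilon>) * real CARD('n))"
  for w :: "real^'n" by (simp add: capped_simplex_def)

lemma cs_segment:
  fixes p u :: "real^'n"
  assumes p: "p \<in> capped_simplex \<epsilon>" and u: "u \<in> capped_simplex \<epsilon>" and s: "0 \<le> s" "s \<le> 1"
  shows "p + s *\<^sub>R (u - p) \<in> capped_simplex \<epsilon>"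
proof -
  have e: "(p + s *\<^sub>R (u - p)) $ n = (1 - s) * p $ n + s * u $ n" for n
    by (simp add: algebra_simps)
  have "(\<Sum>n\<in>UNIV. (p + s *\<^sub>R (u - p)) $ n) = (1 - s) * (\<Sum>n\<in>UNIV. p $ n) + s * (\<Sum>n\<in>UNIV. u $ n)"
    unfolding e by (simp add: sum.distrib sum_distrib_left)
  also have "\<dots> = 1" using cs_sum[OF p] cs_sum[OF u] by simp
  finally have s1: "(\<Sum>n\<in>UNIV. (p + s *\<^sub>R (u - p)) $ n) = 1" .
  have "0 \<le> (1 - s) * p $ n + s * u $ n" for n
    using cs_nonneg[OF p, of n] cs_nonneg[OF u, of n] s by simp
  moreover have "(1 - s) * p $ n + s * u $ n \<le> 1 / ((1 - \<epsilon>) * real CARD('n))" for n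
  proof -
    let ?M = "1 / ((1 - \<epsilon>) * real CARD('n))"
    have "(1 - s) * p $ n \<le> (1 - s) * ?M" using cs_cap[OF p, of n] s by (intro mult_left_mono) auto
    moreover have "s * u $ n \<le> s * ?M" using cs_cap[OF u, of n] s by (intro mult_left_mono) auto
    moreover have "(1 - s) * ?M + s * ?M = ?M" by (simp add: add_divide_distrib[symmetric])
    ultimately show ?thesis by linarith
  qed
  ultimately show ?thesis using s1 unfolding capped_simplex_def mem_Collect_eq e by blast
qed

lemma uniform_in_cs:
  assumes "0 \<le> \<epsilon>" "\<epsilon> < 1"
  shows "((\<chi> n. 1 / real CARD('n)) :: real^'n::finite) \<in> capped_simplex \<epsilon>"
proof -
  have N: "real CARD('n) > 0" by simp
  have "1 / real CARD('n) \<le> 1 / ((1 - \<epsilon>) * real CARD('n))"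
    using assms N by (intro divide_left_mono) (auto intro: mult_pos_pos simp: mult_le_cancel_right1)
  then show ?thesis unfolding capped_simplex_def by auto
qed


lemma RE_diff: "RE q c - RE p c = (\<Sum>n\<in>UNIV. q $ n * ln (q $ n / c $ n) - p $ n * ln (p $ n / c $ n))"
  by (simp add: RE_def sum_subtractf)

lemma proj_var:
  fixes p c u :: "real^'n::finite"
  assumes cp: "\<forall>n. c $ n > 0" and pC: "p \<in> capped_simplex \<epsilon>"
    and opt: "\<forall>q\<in>capped_simplex \<epsilon>. RE p c \<le> RE q c"
    and pp: "\<forall>n. p $ n > 0" and uC: "u \<in> capped_simplex \<epsilon>"
  shows "0 \<le> (\<Sum>n\<in>UNIV. (u $ n - p $ n) * ln (p $ n / c $ n))"
proof (rule ccontr)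
  define d where "d n = u $ n - p $ n" for n
  define D where "D = (\<Sum>n\<in>UNIV. d n * ln (p $ n / c $ n))"
  define K where "K = (\<Sum>n\<in>UNIV. (d n)^2 / p $ n)"
  assume "\<not> 0 \<le> (\<Sum>n\<in>UNIV. (u $ n - p $ n) * ln (p $ n / c $ n))"
  then have Dneg: "D < 0" by (simp add: D_def d_def)
  have K0: "K \<ge> 0" unfolding K_def using pp by (intro sum_nonneg) (simp add: less_imp_le)
  have dsum: "(\<Sum>n\<in>UNIV. d n) = 0"
    using cs_sum[OF pC] cs_sum[OF uC] by (simp add: d_def sum_subtractf)
  have bound: "RE (p + s *\<^sub>R (u - p)) c - RE p c \<le> s * D + s^2 * K" if s: "0 \<le> s" "s \<le> 1" for s
  proof -
    let ?q = "p + s *\<^sub>R (u - p)"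
    have qC: "?q \<in> capped_simplex \<epsilon>" by (rule cs_segment[OF pC uC s])
    have qn: "?q $ n - p $ n = s * d n" for n by (simp add: d_def)
    have "RE ?q c - RE p c \<le> (\<Sum>n\<in>UNIV. (ln (p $ n / c $ n) + 1) * (?q $ n - p $ n) + (?q $ n - p $ n)^2 / p $ n)"
      unfolding RE_diff
      by (intro sum_mono term_bound) (use pp cp cs_nonneg[OF qC] in auto)
    also have "\<dots> = (\<Sum>n\<in>UNIV. s * (d n * ln (p $ n / c $ n)) + s * d n + s^2 * ((d n)^2 / p $ n))"
      unfolding qn by (rule sum.cong) (simp_all add: algebra_simps power2_eq_square)
    also have "\<dots> = s * D + s * (\<Sum>n\<in>UNIV. d n) + s^2 * K"
      by (simp add: sum.distrib sum_distrib_left D_def K_def)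
    finally show ?thesis using dsum by simp
  qed
  define s where "s = min 1 (- D / (2 * (K + 1)))"
  have s0: "s > 0" using Dneg K0 by (simp add: s_def divide_neg_pos)
  have s1: "s \<le> 1" by (simp add: s_def)
  have s2: "s \<le> - D / (2 * (K + 1))" by (simp add: s_def)
  have "s * K \<le> - D / 2"
  proof -
    have "s * K \<le> (- D / (2 * (K + 1))) * K" using s2 K0 by (rule mult_right_mono)
    also have "\<dots> \<le> - D / 2" using K0 Dneg by (simp add: field_simps)
    finally show ?thesis .
  qed
  then have "D + s * K < 0" using Dneg by linarith
  then have "s * (D + s * K) < 0" using s0 by (simp add: mult_pos_neg)
  then have "s * D + s^2 * K < 0" by (simp add: algebra_simps power2_eq_square)
  with bound[of s] s0 s1 have "RE (p + s *\<^sub>R (u - p)) c < RE p c" by simp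
  moreover have "RE p c \<le> RE (p + s *\<^sub>R (u - p)) c"
    using opt cs_segment[OF pC uC] s0 s1 by simp
  ultimately show False by simp
qed

lemma proj_pos:
  fixes p c :: "real^'n::finite"
  assumes eps: "0 \<le> \<epsilon>" "\<epsilon> < 1"
    and cp: "\<forall>n. c $ n > 0" and pC: "p \<in> capped_simplex \<epsilon>"
    and opt: "\<forall>q\<in>capped_simplex \<epsilon>. RE p c \<le> RE q c"
  shows "p $ k > 0"
proof (rule ccontr)
  assume "\<not> p $ k > 0"
  then have pk: "p $ k = 0" using cs_nonneg[OF pC, of k] by simp
  define N where "N = real CARD('n)"
  have Np: "N > 0" by (simp add: N_def)
  define u :: "real^'n" where "u = (\<chi> n. 1 / real CARD('n))"
  have uC: "u \<in> capped_simplex \<epsilon>" unfolding u_def by (rule uniform_in_cs[OF eps])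
  define d where "d n = u $ n - p $ n" for n
  define M where "M n = (if p $ n > 0 then \<bar>d n * (ln (p $ n / c $ n) + 1)\<bar> + (d n)^2 / p $ n else 0)" for n
  define SM where "SM = (\<Sum>n\<in>UNIV. M n)"
  define L where "L = (\<Sum>n\<in>UNIV. \<bar>ln (N * c $ n)\<bar>)"
  have M0: "M n \<ge> 0" for n by (simp add: M_def)
  have SM0: "SM \<ge> 0" unfolding SM_def using M0 by (simp add: sum_nonneg)
  have L0: "L \<ge> 0" unfolding L_def by (simp add: sum_nonneg)
  define s where "s = exp (- (N * SM + L + 1))"
  have s0: "s > 0" by (simp add: s_def)
  have NSM: "N * SM \<ge> 0" using Np SM0 by simp
  have s1: "s \<le> 1" using NSM L0 by (simp add: s_def)
  have lns: "ln s + L = - (N * SM + 1)" by (simp add: s_def)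
  define A where "A = (s / N) * (ln s + L)"
  have Aneg: "A < 0"
  proof -
    have "- (N * SM + 1) < 0" using NSM by linarith
    then have "(s / N) * (- (N * SM + 1)) < 0" using s0 Np by (intro mult_pos_neg) auto
    then show ?thesis unfolding A_def lns .
  qed
  let ?q = "p + s *\<^sub>R (u - p)"
  have qC: "?q \<in> capped_simplex \<epsilon>" by (rule cs_segment[OF pC uC]) (use s0 s1 in auto)
  have T: "?q $ n * ln (?q $ n / c $ n) - p $ n * ln (p $ n / c $ n) \<le> s * M n + (if p $ n = 0 then A else 0)" for n
  proof (cases "p $ n > 0")
    case True
    have "?q $ n * ln (?q $ n / c $ n) - p $ n * ln (p $ n / c $ n)
        \<le> (ln (p $ n / c $ n) + 1) * (?q $ n - p $ n) + (?q $ n - p $ n)^2 / p $ n"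
      by (rule term_bound) (use True cp cs_nonneg[OF qC] in auto)
    also have "\<dots> = s * (d n * (ln (p $ n / c $ n) + 1)) + s^2 * ((d n)^2 / p $ n)"
      by (simp add: d_def algebra_simps power2_eq_square)
    also have "\<dots> \<le> s * \<bar>d n * (ln (p $ n / c $ n) + 1)\<bar> + s * ((d n)^2 / p $ n)"
    proof -
      have "s * (d n * (ln (p $ n / c $ n) + 1)) \<le> s * \<bar>d n * (ln (p $ n / c $ n) + 1)\<bar>"
        using s0 by (intro mult_left_mono) auto
      moreover have "s^2 * ((d n)^2 / p $ n) \<le> s * ((d n)^2 / p $ n)"
      proof (intro mult_right_mono)
        show "s^2 \<le> s" using s0 s1 by (simp add: power2_eq_square mult_left_le_one_le)
        show "0 \<le> (d n)^2 / p $ n" using True by simp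
      qed
      ultimately show ?thesis by linarith
    qed
    finally show ?thesis using True by (simp add: M_def algebra_simps)
  next
    case False
    then have p0: "p $ n = 0" using cs_nonneg[OF pC, of n] by simp
    have qn: "?q $ n = s / N" using p0 by (simp add: u_def N_def)
    have cn: "c $ n > 0" using cp by simp
    have "ln (s / N / c $ n) = ln s - ln (N * c $ n)"
      using s0 Np cn by (simp add: ln_div ln_mult divide_divide_eq_left)
    also have "\<dots> \<le> ln s + L"
    proof -
      have "\<bar>ln (N * c $ n)\<bar> \<le> L" unfolding L_def
        by (rule member_le_sum[of n UNIV "\<lambda>n. \<bar>ln (N * c $ n)\<bar>"]) auto
      then show ?thesis by linarith
    qed
    finally have "(s / N) * ln (s / N / c $ n) \<le> (s / N) * (ln s + L)"
      using s0 Np by (intro mult_left_mono) auto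
    then show ?thesis using p0 qn by (simp add: M_def A_def)
  qed
  have "RE ?q c - RE p c \<le> (\<Sum>n\<in>UNIV. s * M n + (if p $ n = 0 then A else 0))"
    unfolding RE_diff by (intro sum_mono T)
  also have "\<dots> = s * SM + (\<Sum>n\<in>UNIV. (if p $ n = 0 then A else 0))"
    by (simp add: sum.distrib sum_distrib_left SM_def)
  finally have R1: "RE ?q c - RE p c \<le> s * SM + (\<Sum>n\<in>UNIV. (if p $ n = 0 then A else 0))" .
  have R2: "(\<Sum>n\<in>UNIV. (if p $ n = 0 then A else 0)) \<le> A"
  proof -
    have "(\<Sum>n\<in>UNIV. (if p $ n = 0 then A else 0)) = (if p $ k = 0 then A else 0) + (\<Sum>n\<in>UNIV - {k}. (if p $ n = 0 then A else 0))"
      by (rule sum.remove) auto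
    also have "(\<Sum>n\<in>UNIV - {k}. (if p $ n = 0 then A else 0)) \<le> 0"
      using Aneg by (intro sum_nonpos) auto
    finally show ?thesis using pk by simp
  qed
  have R3: "s * SM + A = - (s / N)"
    unfolding A_def lns using Np by (simp add: field_simps)
  have "RE ?q c - RE p c \<le> - (s / N)" using R1 R2 R3 by linarith
  moreover have "s / N > 0" using s0 Np by simp
  ultimately have "RE ?q c < RE p c" by linarith
  moreover have "RE p c \<le> RE ?q c" using opt qC by simp
  ultimately show False by simp
qed


lemma term_ge: "p > 0 \<Longrightarrow> c > 0 \<Longrightarrow> p * ln (p / c) \<ge> p - (c::real)"
proof -
  assume p: "p > 0" and c: "c > 0"
  have "ln (c / p) \<le> c / p - 1" using ln_le_minus_one[of "c / p"] p c by simp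
  moreover have "ln (p / c) = - ln (c / p)" using p c by (simp add: ln_div)
  ultimately have "ln (p / c) \<ge> 1 - c / p" by simp
  then have "p * ln (p / c) \<ge> p * (1 - c / p)" using p by (simp add: mult_left_mono)
  also have "p * (1 - c / p) = p - c" using p by (simp add: field_simps)
  finally show ?thesis .
qed

lemma term_ge0: "u \<ge> 0 \<Longrightarrow> p > 0 \<Longrightarrow> u * ln (u / p) \<ge> u - (p::real)"
  by (cases "u = 0") (auto simp: term_ge)

lemma RE_nonneg:
  fixes u p :: "real^'n::finite"
  assumes uC: "u \<in> capped_simplex \<epsilon>" and pp: "\<forall>n. p $ n > 0" and ps: "(\<Sum>n\<in>UNIV. p $ n) = 1"
  shows "RE u p \<ge> 0"
proof -
  have "RE u p \<ge> (\<Sum>n\<in>UNIV. u $ n - p $ n)"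
    unfolding RE_def by (intro sum_mono term_ge0) (use cs_nonneg[OF uC] pp in auto)
  also have "(\<Sum>n\<in>UNIV. u $ n - p $ n) = 0" using cs_sum[OF uC] ps by (simp add: sum_subtractf)
  finally show ?thesis .
qed

lemma RE_uniform:
  fixes u :: "real^'n::finite"
  assumes eps: "0 \<le> \<epsilon>" "\<epsilon> < 1" and uC: "u \<in> capped_simplex \<epsilon>"
  shows "RE u (\<chi> n. 1 / real CARD('n)) \<le> ln (1 / (1 - \<epsilon>))"
proof -
  define N where "N = real CARD('n)"
  have Np: "N > 0" by (simp add: N_def)
  have t: "u $ n * ln (u $ n / (1 / N)) \<le> u $ n * ln (1 / (1 - \<epsilon>))" for n
  proof (cases "u $ n = 0")
    case True then show ?thesis by simp
  next
    case False
    then have up: "u $ n > 0" using cs_nonneg[OF uC, of n] by simp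
    have "u $ n \<le> 1 / ((1 - \<epsilon>) * N)" using cs_cap[OF uC, of n] by (simp add: N_def)
    then have "u $ n * N \<le> 1 / (1 - \<epsilon>)" using Np eps by (simp add: field_simps)
    moreover have "u $ n * N > 0" using up Np by simp
    ultimately have "ln (u $ n * N) \<le> ln (1 / (1 - \<epsilon>))" using eps by (subst ln_le_cancel_iff) auto
    moreover have "u $ n / (1 / N) = u $ n * N" by simp
    ultimately show ?thesis using up by (simp add: mult_left_mono)
  qed
  have "RE u (\<chi> n. 1 / real CARD('n)) \<le> (\<Sum>n\<in>UNIV. u $ n * ln (1 / (1 - \<epsilon>)))"
    unfolding RE_def using t by (simp add: N_def sum_mono)
  also have "\<dots> = ln (1 / (1 - \<epsilon>))" using cs_sum[OF uC] by (simp add: sum_distrib_right[symmetric])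
  finally show ?thesis .
qed

lemma mw_step:
  fixes w p u m :: "real^'n::finite"
  assumes eps: "0 \<le> \<epsilon>" "\<epsilon> < 1"
    and wC: "w \<in> capped_simplex \<epsilon>" and wp: "\<forall>n. w $ n > 0"
    and m0: "\<forall>n. 0 \<le> m $ n" and mb: "\<forall>n. m $ n \<le> \<nu>"
    and eta: "\<eta> > 0" "\<eta> * \<nu> \<le> 1/2"
    and pC: "p \<in> capped_simplex \<epsilon>"
    and opt: "\<forall>q\<in>capped_simplex \<epsilon>. RE p (\<chi> n. w $ n * (1 - \<eta> * m $ n)) \<le> RE q (\<chi> n. w $ n * (1 - \<eta> * m $ n))"
    and uC: "u \<in> capped_simplex \<epsilon>"
  shows "(\<forall>n. p $ n > 0) \<and> RE u p \<le> RE u w + \<eta> * (1 + \<eta> * \<nu>) * (m \<bullet> u) - \<eta> * (m \<bullet> w)"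
proof -
  define c :: "real^'n" where "c = (\<chi> n. w $ n * (1 - \<eta> * m $ n))"
  have x0: "0 \<le> \<eta> * m $ n" for n using eta m0 by simp
  have x1: "\<eta> * m $ n \<le> 1/2" for n
  proof -
    have "\<eta> * m $ n \<le> \<eta> * \<nu>" using eta mb by (simp add: mult_left_mono)
    then show ?thesis using eta by linarith
  qed
  have cp: "\<forall>n. c $ n > 0"
  proof
    fix n
    have "1 - \<eta> * m $ n > 0" using x1[of n] by linarith
    then show "c $ n > 0" using wp by (simp add: c_def)
  qed
  have pp: "\<forall>n. p $ n > 0" using proj_pos[OF eps cp pC] opt by (simp add: c_def)
  have var: "0 \<le> (\<Sum>n\<in>UNIV. (u $ n - p $ n) * ln (p $ n / c $ n))"
    using proj_var[OF cp pC _ pp uC] opt by (simp add: c_def)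
  have split: "u $ n * ln (u $ n / c $ n) = u $ n * ln (u $ n / p $ n) + u $ n * ln (p $ n / c $ n)" for n
  proof (cases "u $ n = 0")
    case True then show ?thesis by simp
  next
    case False
    then have up: "u $ n > 0" using cs_nonneg[OF uC, of n] by simp
    have "ln (u $ n / c $ n) = ln (u $ n / p $ n) + ln (p $ n / c $ n)"
    proof -
      have pn: "p $ n > 0" and cn: "c $ n > 0" using pp cp by auto
      show ?thesis using up pn cn by (simp add: ln_div)
    qed
    then show ?thesis by (simp add: algebra_simps)
  qed
  have pyth: "RE u c = RE u p + (\<Sum>n\<in>UNIV. u $ n * ln (p $ n / c $ n))"
    unfolding RE_def split by (simp add: sum.distrib)
  have "(\<Sum>n\<in>UNIV. u $ n * ln (p $ n / c $ n)) = RE p c + (\<Sum>n\<in>UNIV. (u $ n - p $ n) * ln (p $ n / c $ n))"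
    unfolding RE_def by (simp add: sum.distrib[symmetric] algebra_simps)
  then have pyth2: "RE u c \<ge> RE u p + RE p c" using pyth var by linarith
  have "RE p c \<ge> (\<Sum>n\<in>UNIV. p $ n - c $ n)"
    unfolding RE_def by (intro sum_mono term_ge) (use pp cp in auto)
  also have "(\<Sum>n\<in>UNIV. p $ n - c $ n) = \<eta> * (m \<bullet> w)"
  proof -
    have "(\<Sum>n\<in>UNIV. p $ n - c $ n) = (\<Sum>n\<in>UNIV. p $ n) - (\<Sum>n\<in>UNIV. w $ n) + \<eta> * (\<Sum>n\<in>UNIV. m $ n * w $ n)"
      by (simp add: c_def sum_subtractf algebra_simps sum_distrib_left sum.distrib)
    then show ?thesis using cs_sum[OF pC] cs_sum[OF wC] by (simp add: inner_vec_def)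
  qed
  finally have pc: "RE p c \<ge> \<eta> * (m \<bullet> w)" .
  have tu: "u $ n * ln (u $ n / c $ n) \<le> u $ n * ln (u $ n / w $ n) + \<eta> * (1 + \<eta> * \<nu>) * (m $ n * u $ n)" for n
  proof (cases "u $ n = 0")
    case True then show ?thesis by simp
  next
    case False
    then have up: "u $ n > 0" using cs_nonneg[OF uC, of n] by simp
    have om: "1 - \<eta> * m $ n > 0" using x1[of n] by linarith
    have "ln (u $ n / c $ n) = ln (u $ n / w $ n) - ln (1 - \<eta> * m $ n)"
    proof -
      have wn: "w $ n > 0" using wp by auto
      show ?thesis using up wn om by (simp add: c_def ln_div ln_mult)
    qed
    moreover have "- ln (1 - \<eta> * m $ n) \<le> \<eta> * m $ n + (\<eta> * m $ n)^2"
      using ln_one_minus_lower[OF x0 x1, of n] by linarith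
    moreover have "(\<eta> * m $ n)^2 \<le> (\<eta> * m $ n) * (\<eta> * \<nu>)"
      unfolding power2_eq_square using x0[of n] eta mb by (intro mult_left_mono) (auto simp: mult_left_mono)
    ultimately have "ln (u $ n / c $ n) \<le> ln (u $ n / w $ n) + \<eta> * (1 + \<eta> * \<nu>) * m $ n"
      by (simp add: algebra_simps)
    then have "u $ n * ln (u $ n / c $ n) \<le> u $ n * (ln (u $ n / w $ n) + \<eta> * (1 + \<eta> * \<nu>) * m $ n)"
      using up by (simp add: mult_left_mono)
    then show ?thesis by (simp add: algebra_simps)
  qed
  have "RE u c \<le> (\<Sum>n\<in>UNIV. u $ n * ln (u $ n / w $ n) + \<eta> * (1 + \<eta> * \<nu>) * (m $ n * u $ n))"
    unfolding RE_def by (intro sum_mono tu)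
  also have "\<dots> = RE u w + \<eta> * (1 + \<eta> * \<nu>) * (m \<bullet> u)"
    by (simp add: RE_def sum.distrib sum_distrib_left inner_vec_def)
  finally have uc: "RE u c \<le> RE u w + \<eta> * (1 + \<eta> * \<nu>) * (m \<bullet> u)" .
  have "RE u p \<le> RE u w + \<eta> * (1 + \<eta> * \<nu>) * (m \<bullet> u) - \<eta> * (m \<bullet> w)"
    using pyth2 pc uc by linarith
  with pp show ?thesis by blast
qed


lemma transpose_sum: "transpose (\<Sum>i\<in>S. f i) = (\<Sum>i\<in>S. transpose (f i :: real^'p^'p))"
  by (simp add: transpose_def vec_eq_iff sum_component)

lemma transpose_scaleR: "transpose (c *\<^sub>R (A::real^'p^'p)) = c *\<^sub>R transpose A"
  by (simp add: transpose_def vec_eq_iff)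

lemma frob_inner_add_left: "frob_inner (A + C) B = frob_inner A B + frob_inner C B"
  unfolding frob_inner_alt by (simp add: distrib_right sum.distrib)

lemma diam_bound:
  fixes g :: "'n::finite \<Rightarrow> real^'p"
  shows "(norm (g i - g j))^2 \<le> diam_sq g"
proof -
  have "{(norm (g i - g j))^2 | i j. True} = (\<lambda>(i, j). (norm (g i - g j))^2) ` UNIV" by auto
  then have fin: "finite {(norm (g i - g j))^2 | i j. True}" by simp
  show ?thesis unfolding diam_sq_def by (rule Max_ge[OF fin]) auto
qed

lemma center_bound:
  fixes g :: "'n::finite \<Rightarrow> real^'p"
  assumes "\<mu> \<in> convex hull (range g)"
  shows "(g n - \<mu>) \<bullet> (g n - \<mu>) \<le> diam_sq g"
proof -
  have sub: "range g \<subseteq> cball (g n) (sqrt (diam_sq g))"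
    using diam_bound[of g n] by (auto simp: dist_norm intro!: real_le_rsqrt)
  have "convex hull (range g) \<subseteq> cball (g n) (sqrt (diam_sq g))"
    by (rule hull_minimal[OF sub]) (rule convex_cball)
  then have d: "norm (g n - \<mu>) \<le> sqrt (diam_sq g)" using assms by (auto simp: dist_norm)
  have dn: "diam_sq g \<ge> 0" using diam_bound[of g n n] by simp
  have "(norm (g n - \<mu>))^2 \<le> (sqrt (diam_sq g))^2" using d by (intro power_mono) auto
  then show ?thesis using dn by (simp add: power2_norm_eq_inner)
qed


theorem mainTheorem5:
  fixes g :: "'n::finite \<Rightarrow> real^'p::finite"
    and \<mu> :: "real^'p" and \<epsilon> \<eta>w \<eta>\<rho> :: real and T :: nat and w :: "nat \<Rightarrow> real^'n"
  assumes "0 \<le> \<epsilon>" "\<epsilon> < 1"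
    and "T \<ge> 1"
    and "\<mu> \<in> convex hull (range g)"
    and "mw_mmw_run \<epsilon> \<eta>w \<eta>\<rho> g \<mu> T w"
    and "\<forall>n. 0 < w 1 $ n"
    and "0 < \<eta>\<rho> * diam_sq g" "\<eta>\<rho> * diam_sq g \<le> 1/2"
    and "0 < \<eta>w * diam_sq g" "\<eta>w * diam_sq g \<le> 1/2"
    and "\<eta>\<rho> > 0" "\<eta>w > 0"
  shows "(\<forall>u\<in>capped_simplex \<epsilon>. \<forall>\<rho>\<in>density_matrices.
      (\<Sum>t=1..T. frob_inner (S_mat g \<mu> w t) \<rho>)
        \<le> (1 + \<eta>\<rho> * diam_sq g) * (1 + \<eta>w * diam_sq g) * (\<Sum>t=1..T. (loss \<eta>\<rho> g \<mu> w t) \<bullet> u)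
          + (1 + \<eta>\<rho> * diam_sq g) * RE u (w 1) / \<eta>w + ln (real CARD('p)) / \<eta>\<rho>)
    \<and> (w 1 = (\<chi> n. 1 / real CARD('n)) \<longrightarrow>
      (\<forall>u\<in>capped_simplex \<epsilon>. \<forall>\<rho>\<in>density_matrices.
      (\<Sum>t=1..T. frob_inner (S_mat g \<mu> w t) \<rho>)
        \<le> (1 + \<eta>\<rho> * diam_sq g) * (1 + \<eta>w * diam_sq g) * (\<Sum>t=1..T. (loss \<eta>\<rho> g \<mu> w t) \<bullet> u)
          + (1 + \<eta>\<rho> * diam_sq g) * ln (1 / (1 - \<epsilon>)) / \<eta>w + ln (real CARD('p)) / \<eta>\<rho>))"
proof -
  note eps = assms(1,2)
  define \<nu> where "\<nu> = diam_sq g"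
  define z where "z n = g n - \<mu>" for n
  define S where "S t = S_mat g \<mu> w t" for t
  define A where "A t = \<eta>\<rho> *\<^sub>R (\<Sum>t'\<in>{1..t}. S t')" for t
  define L where "L t = loss \<eta>\<rho> g \<mu> w t" for t
  have run1: "w 1 \<in> capped_simplex \<epsilon>" using assms(5) by (simp add: mw_mmw_run_def)
  have runS: "w (Suc t) \<in> capped_simplex \<epsilon> \<and>
        (\<forall>v\<in>capped_simplex \<epsilon>. RE (w (Suc t)) (w_tilde \<eta>w \<eta>\<rho> g \<mu> w t)
                                 \<le> RE v (w_tilde \<eta>w \<eta>\<rho> g \<mu> w t))" if "1 \<le> t" "t \<le> T" for t
    using assms(5) that by (simp add: mw_mmw_run_def)
  have \<nu>pos: "\<nu> > 0" using assms(7,11) unfolding \<nu>_def by (simp add: zero_less_mult_iff)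
  have zb: "z n \<bullet> z n \<le> \<nu>" for n unfolding z_def \<nu>_def by (rule center_bound[OF assms(4)])
  have Sdef: "S t = (\<Sum>n\<in>UNIV. (w t $ n) *\<^sub>R outer (z n))" for t
    by (simp add: S_def S_mat_def z_def)
  have symS: "transpose (S t) = S t" for t
    by (simp add: Sdef transpose_sum transpose_scaleR)
  have symA: "transpose (A t) = A t" for t
    by (simp add: A_def transpose_sum transpose_scaleR symS)
  have rho_eq: "rho_mat \<eta>\<rho> g \<mu> w t = rhoX (A t)" for t
    by (simp add: rho_mat_def Let_def rhoX_def A_def S_def)
  have Ln: "L t $ n = z n \<bullet> (rhoX (A t) *v z n)" for t n
    by (simp add: L_def loss_def rho_eq z_def)
  have L0: "0 \<le> L t $ n" for t n unfolding Ln by (rule rhoX_quad(1)[OF symA])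
  have Lb: "L t $ n \<le> \<nu>" for t n
    using rhoX_quad(2)[OF symA, of "z n" t] zb[of n] unfolding Ln by linarith
  have inner_eq: "frob_inner (S t) (rhoX (A t)) = L t \<bullet> w t" for t
    by (simp add: Sdef frob_inner_sum_left frob_inner_scaleR_left frob_inner_outer_left Ln inner_vec_def mult.commute)
  have Astep: "A (Suc t) = A t + \<eta>\<rho> *\<^sub>R S (Suc t)" for t
    by (simp add: A_def scaleR_add_right)
  have A0: "A 0 = 0" by (simp add: A_def)
  have Gstep: "GG (A (Suc t)) - GG (A t) \<le> \<eta>\<rho> * (L (Suc t) \<bullet> w (Suc t))" for t
  proof -
    have "frob_inner (A t - A (Suc t)) (rhoX (A (Suc t))) \<le> GG (A t) - GG (A (Suc t))"
      by (rule key_convex[OF symA symA])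
    moreover have "frob_inner (A t - A (Suc t)) (rhoX (A (Suc t))) = - (\<eta>\<rho> * (L (Suc t) \<bullet> w (Suc t)))"
      unfolding frob_inner_diff_left Astep frob_inner_add_left frob_inner_scaleR_left inner_eq[symmetric]
      by (simp add: Astep)
    ultimately show ?thesis by linarith
  qed
  have Gtel: "GG (A k) \<le> ln (real CARD('p)) + \<eta>\<rho> * (\<Sum>t=1..k. L t \<bullet> w t)" for k
  proof (induction k)
    case 0 then show ?case by (simp add: A0 GG_zero)
  next
    case (Suc k)
    then show ?case using Gstep[of k] by (simp add: distrib_left)
  qed
  have mmw: "(\<Sum>t=1..T. frob_inner (S t) \<rho>) \<le> (\<Sum>t=1..T. L t \<bullet> w t) + ln (real CARD('p)) / \<eta>\<rho>"
    if rho: "\<rho> \<in> density_matrices" for \<rho>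
  proof -
    have "\<eta>\<rho> * (\<Sum>t=1..T. frob_inner (S t) \<rho>) = frob_inner (A T) \<rho>"
      by (simp add: A_def frob_inner_scaleR_left frob_inner_sum_left)
    also have "\<dots> \<le> GG (A T)" by (rule density_bound[OF symA rho])
    also have "\<dots> \<le> ln (real CARD('p)) + \<eta>\<rho> * (\<Sum>t=1..T. L t \<bullet> w t)" by (rule Gtel)
    finally have "\<eta>\<rho> * (\<Sum>t=1..T. frob_inner (S t) \<rho>) \<le> \<eta>\<rho> * ((\<Sum>t=1..T. L t \<bullet> w t) + ln (real CARD('p)) / \<eta>\<rho>)"
      using assms(11) by (simp add: distrib_left)
    then show ?thesis using assms(11) by simp
  qed
  have wtil: "w_tilde \<eta>w \<eta>\<rho> g \<mu> w t = (\<chi> n. w t $ n * (1 - \<eta>w * L t $ n))" for t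
    by (simp add: w_tilde_def L_def)
  have ewv: "\<eta>w * \<nu> \<le> 1/2" using assms(10) by (simp add: \<nu>_def)
  have step: "(\<forall>n. w (Suc t) $ n > 0) \<and> RE u (w (Suc t)) \<le> RE u (w t) + \<eta>w * (1 + \<eta>w * \<nu>) * (L t \<bullet> u) - \<eta>w * (L t \<bullet> w t)"
    if t: "1 \<le> t" "t \<le> T" and wtC: "w t \<in> capped_simplex \<epsilon>" and wtp: "\<forall>n. w t $ n > 0"
      and uC: "u \<in> capped_simplex \<epsilon>" for t u
  proof (rule mw_step[OF eps wtC wtp _ _ assms(12) ewv])
    show "\<forall>n. 0 \<le> L t $ n" using L0 by simp
    show "\<forall>n. L t $ n \<le> \<nu>" using Lb by simp
    show "w (Suc t) \<in> capped_simplex \<epsilon>" using runS[OF t] by simp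
    show "\<forall>q\<in>capped_simplex \<epsilon>. RE (w (Suc t)) (\<chi> n. w t $ n * (1 - \<eta>w * L t $ n)) \<le> RE q (\<chi> n. w t $ n * (1 - \<eta>w * L t $ n))"
      using runS[OF t] by (simp add: wtil)
  qed (rule uC)
  have wgood: "w k \<in> capped_simplex \<epsilon> \<and> (\<forall>n. w k $ n > 0)" if "1 \<le> k" "k \<le> Suc T" for k
    using that
  proof (induction k)
    case 0 then show ?case by simp
  next
    case (Suc k)
    show ?case
    proof (cases "k = 0")
      case True then show ?thesis using run1 assms(6) by simp
    next
      case False
      then have k: "1 \<le> k" "k \<le> T" using Suc.prems by auto
      then have ih: "w k \<in> capped_simplex \<epsilon> \<and> (\<forall>n. w k $ n > 0)" using Suc.IH by simp
      have "w (Suc k) \<in> capped_simplex \<epsilon>" using runS[OF k] by simp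
      moreover have "\<forall>n. w (Suc k) $ n > 0" using step[OF k _ _ run1] ih by blast
      ultimately show ?thesis by simp
    qed
  qed
  have mwtel: "RE u (w (Suc k)) \<le> RE u (w 1) + (\<Sum>t=1..k. \<eta>w * (1 + \<eta>w * \<nu>) * (L t \<bullet> u) - \<eta>w * (L t \<bullet> w t))"
    if uC: "u \<in> capped_simplex \<epsilon>" and "k \<le> T" for u k
    using that(2)
  proof (induction k)
    case 0 then show ?case by simp
  next
    case (Suc k)
    have k: "1 \<le> Suc k" "Suc k \<le> T" using Suc.prems by auto
    have wg: "w (Suc k) \<in> capped_simplex \<epsilon> \<and> (\<forall>n. w (Suc k) $ n > 0)" using wgood[of "Suc k"] k by simp
    have "RE u (w (Suc (Suc k))) \<le> RE u (w (Suc k)) + \<eta>w * (1 + \<eta>w * \<nu>) * (L (Suc k) \<bullet> u) - \<eta>w * (L (Suc k) \<bullet> w (Suc k))"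
      using step[OF k _ _ uC] wg by blast
    then show ?case using Suc.IH Suc.prems by simp
  qed
  have mwb: "\<eta>w * (\<Sum>t=1..T. L t \<bullet> w t) \<le> RE u (w 1) + \<eta>w * (1 + \<eta>w * \<nu>) * (\<Sum>t=1..T. L t \<bullet> u)"
    if uC: "u \<in> capped_simplex \<epsilon>" for u
  proof -
    have wT: "w (Suc T) \<in> capped_simplex \<epsilon> \<and> (\<forall>n. w (Suc T) $ n > 0)" using wgood[of "Suc T"] by simp
    have "0 \<le> RE u (w (Suc T))" using RE_nonneg[OF uC] wT cs_sum by blast
    also have "\<dots> \<le> RE u (w 1) + (\<Sum>t=1..T. \<eta>w * (1 + \<eta>w * \<nu>) * (L t \<bullet> u) - \<eta>w * (L t \<bullet> w t))"
      by (rule mwtel[OF uC]) simp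
    finally show ?thesis by (simp add: sum_subtractf sum_distrib_left)
  qed
  have main: "(\<Sum>t=1..T. frob_inner (S t) \<rho>)
        \<le> (1 + \<eta>\<rho> * \<nu>) * (1 + \<eta>w * \<nu>) * (\<Sum>t=1..T. L t \<bullet> u)
          + (1 + \<eta>\<rho> * \<nu>) * RE u (w 1) / \<eta>w + ln (real CARD('p)) / \<eta>\<rho>"
    if uC: "u \<in> capped_simplex \<epsilon>" and rho: "\<rho> \<in> density_matrices" for u \<rho>
  proof -
    define a where "a = (\<Sum>t=1..T. L t \<bullet> w t)"
    define b where "b = (\<Sum>t=1..T. L t \<bullet> u)"
    define R where "R = RE u (w 1)"
    have a0: "a \<ge> 0" unfolding a_def
    proof (intro sum_nonneg)
      fix t assume "t \<in> {1..T}"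
      then have wt: "w t \<in> capped_simplex \<epsilon>" using wgood[of t] by simp
      show "0 \<le> L t \<bullet> w t" unfolding inner_vec_def
        using L0 cs_nonneg[OF wt] by (intro sum_nonneg) simp
    qed
    have "\<eta>w * a \<le> R + \<eta>w * (1 + \<eta>w * \<nu>) * b" using mwb[OF uC] by (simp add: a_def b_def R_def)
    moreover have "\<eta>w * ((1 + \<eta>w * \<nu>) * b + R / \<eta>w) = \<eta>w * (1 + \<eta>w * \<nu>) * b + \<eta>w * (R / \<eta>w)"
      by (simp add: distrib_left mult.assoc)
    moreover have "\<eta>w * (R / \<eta>w) = R" using assms(12) by simp
    ultimately have "\<eta>w * a \<le> \<eta>w * ((1 + \<eta>w * \<nu>) * b + R / \<eta>w)" by linarith
    then have ab: "a \<le> (1 + \<eta>w * \<nu>) * b + R / \<eta>w" using assms(12) by simp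
    have "(\<eta>\<rho> * \<nu>) * a \<ge> 0" using a0 assms(7) by (simp add: \<nu>_def)
    then have "a \<le> (1 + \<eta>\<rho> * \<nu>) * a" by (simp add: distrib_right)
    also have "\<dots> \<le> (1 + \<eta>\<rho> * \<nu>) * ((1 + \<eta>w * \<nu>) * b + R / \<eta>w)"
      using ab assms(7) by (intro mult_left_mono) (auto simp: \<nu>_def)
    also have "(1 + \<eta>\<rho> * \<nu>) * ((1 + \<eta>w * \<nu>) * b + R / \<eta>w) = (1 + \<eta>\<rho> * \<nu>) * (1 + \<eta>w * \<nu>) * b + (1 + \<eta>\<rho> * \<nu>) * R / \<eta>w"
      using assms(12) by (simp add: field_simps)
    finally have "a \<le> (1 + \<eta>\<rho> * \<nu>) * (1 + \<eta>w * \<nu>) * b + (1 + \<eta>\<rho> * \<nu>) * R / \<eta>w" .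
    then show ?thesis using mmw[OF rho] by (simp add: a_def b_def R_def)
  qed
  show ?thesis
  proof (intro conjI impI ballI)
    fix u :: "real^'n" and \<rho> :: "real^'p^'p" assume uC: "u \<in> capped_simplex \<epsilon>" and rho: "\<rho> \<in> density_matrices"
    show "(\<Sum>t=1..T. frob_inner (S_mat g \<mu> w t) \<rho>)
        \<le> (1 + \<eta>\<rho> * diam_sq g) * (1 + \<eta>w * diam_sq g) * (\<Sum>t=1..T. (loss \<eta>\<rho> g \<mu> w t) \<bullet> u)
          + (1 + \<eta>\<rho> * diam_sq g) * RE u (w 1) / \<eta>w + ln (real CARD('p)) / \<eta>\<rho>"
      using main[OF uC rho] by (simp add: S_def L_def \<nu>_def)
  next
    fix u :: "real^'n" and \<rho> :: "real^'p^'p" assume w1: "w 1 = (\<chi> n. 1 / real CARD('n))" and uC: "u \<in> capped_simplex \<epsilon>" and rho: "\<rho> \<in> density_matrices"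
    have "RE u (w 1) \<le> ln (1 / (1 - \<epsilon>))" using RE_uniform[OF eps uC] w1 by simp
    then have "(1 + \<eta>\<rho> * \<nu>) * RE u (w 1) / \<eta>w \<le> (1 + \<eta>\<rho> * \<nu>) * ln (1 / (1 - \<epsilon>)) / \<eta>w"
      using assms(7,12) by (intro divide_right_mono mult_left_mono) (auto simp: \<nu>_def)
    then show "(\<Sum>t=1..T. frob_inner (S_mat g \<mu> w t) \<rho>)
        \<le> (1 + \<eta>\<rho> * diam_sq g) * (1 + \<eta>w * diam_sq g) * (\<Sum>t=1..T. (loss \<eta>\<rho> g \<mu> w t) \<bullet> u)
          + (1 + \<eta>\<rho> * diam_sq g) * ln (1 / (1 - \<epsilon>)) / \<eta>w + ln (real CARD('p)) / \<eta>\<rho>"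
      using main[OF uC rho] by (simp add: S_def L_def \<nu>_def)
  qed
qed

end
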